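(* Let $2\le m\le n$. Then for every subgroup $H$ of $\mathrm{Sp}(n,1)$ which is conjugate in $\mathrm{Sp}(n,1)$ to $I_{n-m}\oplus\mathrm{SU}(m,1)$, the set of traces of the elements of $H$ is not contained in $\mathbb R$.
   Context: $\mathbb H$ denotes the quaternions. $\mathrm{Sp}(n,1)=\{A\in\mathrm{GL}(n+1,\mathbb H): A^*I_{n,1}A=I_{n,1}\}$ with $A^*$ the conjugate transpose and $I_{n,1}=\mathrm{diag}(1,\dots,1,-1)$. $\mathrm{SU}(m,1)$ is the group of complex $(m+1)\times(m+1)$ matrices of determinant $1$ preserving $I_{m,1}$. $I_{n-m}\oplus\mathrm{SU}(m,1)$ is the subgroup of block diagonal matrices with the $(n-m)\times(n-m)$ identity in the upper left block and an element of $\mathrm{SU}(m,1)$ in the lower right block. The trace of a quaternionic matrix is the sum of its diagonal entries. *)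

theory Defs
  imports Complex_Main "Jordan_Normal_Form.Matrix" "Jordan_Normal_Form.Determinant"
begin

datatype quat = Quat (qRe: real) (qI: real) (qJ: real) (qK: real)

lemma quat_eq_iff: "x = y \<longleftrightarrow> qRe x = qRe y \<and> qI x = qI y \<and> qJ x = qJ y \<and> qK x = qK y"
  by (cases x; cases y) auto

instantiation quat :: ring_1
begin
definition "0 = Quat 0 0 0 0"
definition "1 = Quat 1 0 0 0"
definition "x + y = Quat (qRe x + qRe y) (qI x + qI y) (qJ x + qJ y) (qK x + qK y)"
definition "x - y = Quat (qRe x - qRe y) (qI x - qI y) (qJ x - qJ y) (qK x - qK y)"
definition "- x = Quat (- qRe x) (- qI x) (- qJ x) (- qK x)"
definition "x * y = Quat
   (qRe x * qRe y - qI x * qI y - qJ x * qJ y - qK x * qK y)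
   (qRe x * qI y + qI x * qRe y + qJ x * qK y - qK x * qJ y)
   (qRe x * qJ y - qI x * qK y + qJ x * qRe y + qK x * qI y)
   (qRe x * qK y + qI x * qJ y - qJ x * qI y + qK x * qRe y)"
instance
  by standard (simp_all add: quat_eq_iff zero_quat_def one_quat_def plus_quat_def minus_quat_def
      uminus_quat_def times_quat_def algebra_simps)
end

definition qcnj :: "quat \<Rightarrow> quat" where
  "qcnj x = Quat (qRe x) (- qI x) (- qJ x) (- qK x)"

definition qreal :: "quat set" where
  "qreal = {x. qI x = 0 \<and> qJ x = 0 \<and> qK x = 0}"

definition quat_of_complex :: "complex \<Rightarrow> quat" where
  "quat_of_complex z = Quat (Re z) (Im z) 0 0"

definition qadjoint :: "quat mat \<Rightarrow> quat mat" where
  "qadjoint A = transpose_mat (map_mat qcnj A)"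

definition cadjoint :: "complex mat \<Rightarrow> complex mat" where
  "cadjoint A = transpose_mat (map_mat cnj A)"

definition qtrace :: "quat mat \<Rightarrow> quat" where
  "qtrace A = (\<Sum>i<dim_row A. A $$ (i, i))"

definition I_form :: "nat \<Rightarrow> 'a::ring_1 mat" where
  "I_form k = mat (k + 1) (k + 1) (\<lambda>(i, j). if i = j then (if i = k then -1 else 1) else 0)"

definition Sp :: "nat \<Rightarrow> quat mat set" where
  "Sp n = {A \<in> carrier_mat (n + 1) (n + 1).
             invertible_mat A \<and> qadjoint A * I_form n * A = I_form n}"

definition SU :: "nat \<Rightarrow> complex mat set" where
  "SU m = {B \<in> carrier_mat (m + 1) (m + 1).
             det B = 1 \<and> cadjoint B * I_form m * B = I_form m}"

definition block_embed :: "nat \<Rightarrow> nat \<Rightarrow> complex mat \<Rightarrow> quat mat" where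
  "block_embed n m B = four_block_mat (1\<^sub>m (n - m)) (0\<^sub>m (n - m) (m + 1))
                                      (0\<^sub>m (m + 1) (n - m)) (map_mat quat_of_complex B)"

definition ISU :: "nat \<Rightarrow> nat \<Rightarrow> quat mat set" where
  "ISU n m = block_embed n m ` SU m"

end

theory Submission
  imports Defs
begin


definition dg :: "nat \<Rightarrow> (nat \<Rightarrow> 'a::ring_1) \<Rightarrow> 'a mat" where
  "dg N d = mat N N (\<lambda>(i,j). if i = j then d i else 0)"

lemma dg_carrier[simp]: "dg N d \<in> carrier_mat N N" by (simp add: dg_def)
lemma dg_dims[simp]: "dim_row (dg N d) = N" "dim_col (dg N d) = N" by (simp_all add: dg_def)
lemma dg_index[simp]: "i < N \<Longrightarrow> j < N \<Longrightarrow> dg N d $$ (i,j) = (if i = j then d i else 0)"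
  by (simp add: dg_def)

lemma mult_dg_right:
  assumes "A \<in> carrier_mat r N" "i < r" "k < N"
  shows "(A * dg N d) $$ (i,k) = A $$ (i,k) * d k"
proof -
  have "(A * dg N d) $$ (i,k) = (\<Sum>j<N. A $$ (i,j) * (if j = k then d k else 0))"
    using assms by (auto simp: scalar_prod_def atLeast0LessThan intro!: sum.cong)
  also have "\<dots> = A $$ (i,k) * d k"
    using assms by (simp add: if_distrib[of "\<lambda>x. _ * x"] cong: if_cong)
  finally show ?thesis .
qed

lemma mult_dg_left:
  assumes "A \<in> carrier_mat N c" "k < N" "i < c"
  shows "(dg N d * A) $$ (k,i) = d k * A $$ (k,i)"
proof -
  have "(dg N d * A) $$ (k,i) = (\<Sum>j<N. (if k = j then d k else 0) * A $$ (j,i))"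
    using assms by (auto simp: scalar_prod_def atLeast0LessThan intro!: sum.cong)
  also have "\<dots> = d k * A $$ (k,i)"
    using assms by (simp add: if_distrib[of "\<lambda>x. x * _"] cong: if_cong)
  finally show ?thesis .
qed

definition sg :: "nat \<Rightarrow> nat \<Rightarrow> 'a::ring_1" where "sg N k = (if k = N then -1 else 1)"

lemma I_form_dg: "I_form N = dg (N+1) (sg N)"
  by (rule eq_matI) (auto simp: I_form_def sg_def)

lemma dg_mult: "dg N d * dg N e = dg N (\<lambda>k. d k * e k)"
proof (rule eq_matI)
  fix i j assume "i < dim_row (dg N (\<lambda>k. d k * e k))" "j < dim_col (dg N (\<lambda>k. d k * e k))"
  then show "(dg N d * dg N e) $$ (i, j) = dg N (\<lambda>k. d k * e k) $$ (i, j)"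
    by (subst mult_dg_right[of _ N]) auto
qed auto

lemma det_dg: "det (dg N d) = (\<Prod>k<N. d k)"
  by (subst det_upper_triangular[of _ N]) (auto simp: upper_triangular_def prod_list_diag_prod atLeast0LessThan)

lemma dg_cong: "(\<And>k. k < N \<Longrightarrow> d k = e k) \<Longrightarrow> dg N d = dg N e"
  by (rule eq_matI) auto

lemma cadjoint_dg: "cadjoint (dg N c) = dg N (\<lambda>k. cnj (c k))"
  by (rule eq_matI) (auto simp: cadjoint_def)

lemma su_dg:
  assumes "\<And>k. k < m+1 \<Longrightarrow> cnj (c k) * c k = 1" "(\<Prod>k<m+1. c k) = 1"
  shows "dg (m+1) c \<in> SU m"
proof -
  have "cadjoint (dg (m+1) c) * I_form m * dg (m+1) c = dg (m+1) (\<lambda>k. cnj (c k) * sg m k * c k)"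
    by (simp add: cadjoint_dg I_form_dg dg_mult)
  also have "\<dots> = dg (m+1) (sg m)"
    by (rule dg_cong) (use assms(1) in \<open>auto simp: sg_def\<close>)
  finally show ?thesis using assms(2) by (simp add: SU_def det_dg I_form_dg)
qed

lemma block_embed_dg:
  assumes "m \<le> n"
  shows "block_embed n m (dg (m+1) c) = dg (n+1) (\<lambda>k. if k < n-m then 1 else quat_of_complex (c (k-(n-m))))"
  by (rule eq_matI) (use assms in \<open>auto simp: block_embed_def quat_of_complex_def zero_quat_def\<close>)

lemma trace_conj_dg:
  assumes g: "g \<in> carrier_mat N N" and g': "g' \<in> carrier_mat N N"
  shows "qtrace (g * dg N d * g') = (\<Sum>i<N. \<Sum>k<N. g $$ (i,k) * d k * g' $$ (k,i))"
proof -
  have "(g * dg N d * g') $$ (i,i) = (\<Sum>k<N. g $$ (i,k) * d k * g' $$ (k,i))" if iN: "i < N" for i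
  proof -
    have "(g * dg N d * g') $$ (i,i) = (\<Sum>k<N. (g * dg N d) $$ (i,k) * g' $$ (k,i))"
      using iN g g' by (auto simp: scalar_prod_def atLeast0LessThan intro!: sum.cong)
    also have "\<dots> = (\<Sum>k<N. g $$ (i,k) * d k * g' $$ (k,i))"
      by (rule sum.cong) (use g iN in \<open>auto simp del: index_mult_mat simp: mult_dg_right[OF g]\<close>)
    finally show ?thesis .
  qed
  then show ?thesis using g unfolding qtrace_def by simp
qed

lemma Sp_inv:
  assumes g: "g \<in> Sp n" and g': "g' \<in> carrier_mat (n+1) (n+1)" and gg: "g * g' = 1\<^sub>m (n+1)"
    and k: "k < n+1" and i: "i < n+1"
  shows "g' $$ (k,i) = sg n k * qcnj (g $$ (i,k)) * sg n i"
proof -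
  have gc: "g \<in> carrier_mat (n+1) (n+1)" and eq: "qadjoint g * I_form n * g = I_form n"
    using g by (auto simp: Sp_def)
  have ac: "qadjoint g \<in> carrier_mat (n+1) (n+1)" using gc by (auto simp: qadjoint_def)
  have Ic: "I_form n \<in> carrier_mat (n+1) (n+1)" by (simp add: I_form_dg)
  have II: "I_form n * I_form n = (1\<^sub>m (n+1) :: quat mat)"
    unfolding I_form_dg dg_mult by (rule eq_matI) (auto simp: sg_def)
  have AI: "qadjoint g * I_form n \<in> carrier_mat (n+1) (n+1)" using ac Ic by (rule mult_carrier_mat)
  have "(qadjoint g * I_form n * g) * g' = (qadjoint g * I_form n) * (g * g')"
    by (rule assoc_mult_mat[OF AI gc g'])
  then have "qadjoint g * I_form n = (qadjoint g * I_form n * g) * g'"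
    using gg right_mult_one_mat[OF AI] by simp
  also have "\<dots> = I_form n * g'" using eq by simp
  finally have e1: "qadjoint g * I_form n = I_form n * g'" .
  have "g' = (I_form n * I_form n) * g'" using II g' by simp
  also have "\<dots> = I_form n * (qadjoint g * I_form n)" using e1 assoc_mult_mat[OF Ic Ic g'] by simp
  finally have "g' = I_form n * (qadjoint g * I_form n)" .
  then have "g' $$ (k,i) = (I_form n * (qadjoint g * I_form n)) $$ (k,i)" by simp
  also have "\<dots> = sg n k * ((qadjoint g * I_form n) $$ (k,i))"
    unfolding I_form_dg using ac k i by (subst mult_dg_left[of _ "n+1" "n+1"]) auto
  also have "\<dots> = sg n k * (qadjoint g $$ (k,i) * sg n i)"
    unfolding I_form_dg using ac k i by (subst mult_dg_right[of _ "n+1"]) auto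
  also have "\<dots> = sg n k * qcnj (g $$ (i,k)) * sg n i"
    using gc k i by (simp add: qadjoint_def mult.assoc)
  finally show ?thesis .
qed

lemma Sp_col:
  assumes g: "g \<in> Sp n" and k: "k < n+1"
  shows "(\<Sum>i<n+1. qcnj (g $$ (i,k)) * sg n i * g $$ (i,k)) = sg n k"
proof -
  have gc: "g \<in> carrier_mat (n+1) (n+1)" and eq: "qadjoint g * I_form n * g = I_form n"
    using g by (auto simp: Sp_def)
  have ac: "qadjoint g \<in> carrier_mat (n+1) (n+1)" using gc by (auto simp: qadjoint_def)
  have "sg n k = (qadjoint g * I_form n * g) $$ (k,k)" using eq k by (simp add: I_form_dg)
  also have "\<dots> = (\<Sum>i<n+1. (qadjoint g * I_form n) $$ (k,i) * g $$ (i,k))"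
    using k gc ac by (auto simp: scalar_prod_def atLeast0LessThan I_form_dg intro!: sum.cong)
  also have "\<dots> = (\<Sum>i<n+1. qcnj (g $$ (i,k)) * sg n i * g $$ (i,k))"
  proof (rule sum.cong)
    fix i assume "i \<in> {..<n+1}"
    then have i: "i < n+1" by simp
    have "(qadjoint g * I_form n) $$ (k,i) = qadjoint g $$ (k,i) * sg n i"
      unfolding I_form_dg by (rule mult_dg_right[OF ac k i])
    then show "(qadjoint g * I_form n) $$ (k,i) * g $$ (i,k) = qcnj (g $$ (i,k)) * sg n i * g $$ (i,k)"
      using gc i k by (simp add: qadjoint_def)
  qed simp
  finally show ?thesis by simp
qed




lemma neg_lemma_c:
  fixes \<alpha> \<gamma> :: "nat \<Rightarrow> complex"
  assumes A: "(\<Sum>i<n. \<alpha> i * cnj (\<alpha> i)) = \<alpha> n * cnj (\<alpha> n) - 1/2"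
    and G: "(\<Sum>i<n. \<gamma> i * cnj (\<gamma> i)) = \<gamma> n * cnj (\<gamma> n) - 1/2"
    and X: "(\<Sum>i<n. \<alpha> i * cnj (\<gamma> i)) = \<alpha> n * cnj (\<gamma> n)"
  shows False
proof -
  define w where "w i = \<gamma> n * \<alpha> i - \<alpha> n * \<gamma> i" for i
  have X': "(\<Sum>i<n. \<gamma> i * cnj (\<alpha> i)) = \<gamma> n * cnj (\<alpha> n)"
  proof -
    have "(\<Sum>i<n. \<gamma> i * cnj (\<alpha> i)) = cnj (\<Sum>i<n. \<alpha> i * cnj (\<gamma> i))" by (simp add: mult.commute)
    also have "\<dots> = \<gamma> n * cnj (\<alpha> n)" using X by (simp add: mult.commute)
    finally show ?thesis .
  qed
  have "(\<Sum>i<n. w i * cnj (w i)) = \<gamma> n * cnj (\<gamma> n) * (\<Sum>i<n. \<alpha> i * cnj (\<alpha> i))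
      - \<gamma> n * cnj (\<alpha> n) * (\<Sum>i<n. \<alpha> i * cnj (\<gamma> i))
      - \<alpha> n * cnj (\<gamma> n) * (\<Sum>i<n. \<gamma> i * cnj (\<alpha> i))
      + \<alpha> n * cnj (\<alpha> n) * (\<Sum>i<n. \<gamma> i * cnj (\<gamma> i))"
    by (simp add: w_def sum_distrib_left sum_subtractf sum.distrib[symmetric] algebra_simps)
  also have "\<dots> = - (\<alpha> n * cnj (\<alpha> n) + \<gamma> n * cnj (\<gamma> n)) / 2"
    unfolding A G X X' by (simp add: algebra_simps)
  finally have S: "(\<Sum>i<n. w i * cnj (w i)) = - (\<alpha> n * cnj (\<alpha> n) + \<gamma> n * cnj (\<gamma> n)) / 2" .
  have "0 \<le> (\<Sum>i<n. (cmod (w i))^2)" by (simp add: sum_nonneg)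
  also have "(\<Sum>i<n. (cmod (w i))^2) = Re (\<Sum>i<n. w i * cnj (w i))"
    by (simp add: complex_norm_square[symmetric] Re_sum)
  also have "\<dots> = - ((cmod (\<alpha> n))^2 + (cmod (\<gamma> n))^2) / 2"
    unfolding S by (simp add: complex_norm_square[symmetric])
  finally have le: "(cmod (\<alpha> n))^2 + (cmod (\<gamma> n))^2 \<le> 0" by simp
  have "0 \<le> (\<Sum>i<n. (cmod (\<alpha> i))^2)" by (simp add: sum_nonneg)
  also have "(\<Sum>i<n. (cmod (\<alpha> i))^2) = Re (\<Sum>i<n. \<alpha> i * cnj (\<alpha> i))"
    by (simp add: complex_norm_square[symmetric] Re_sum)
  also have "\<dots> = (cmod (\<alpha> n))^2 - 1/2"
    unfolding A by (simp add: complex_norm_square[symmetric])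
  finally have "1/2 \<le> (cmod (\<alpha> n))^2" by simp
  moreover have "0 \<le> (cmod (\<gamma> n))^2" by simp
  ultimately show False using le by linarith
qed

lemma neg_lemma_r:
  fixes a b c d :: "nat \<Rightarrow> real"
  assumes h1: "(\<Sum>i<n. a i^2 + b i^2 - c i^2 - d i^2) - (a n^2 + b n^2 - c n^2 - d n^2) = 0"
    and h2: "(\<Sum>i<n. b i * c i + a i * d i) - (b n * c n + a n * d n) = 0"
    and h3: "(\<Sum>i<n. b i * d i - a i * c i) - (b n * d n - a n * c n) = 0"
    and h4: "(\<Sum>i<n. a i^2 + b i^2 + c i^2 + d i^2) - (a n^2 + b n^2 + c n^2 + d n^2) = -1"
  shows False
proof -
  define \<alpha> where "\<alpha> i = Complex (a i) (b i)" for i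
  define \<gamma> where "\<gamma> i = Complex (c i) (- d i)" for i
  have s1: "(\<Sum>i<n. a i^2 + b i^2) = (a n^2 + b n^2) - 1/2"
    using h1 h4 by (simp add: sum.distrib sum_subtractf)
  have s2: "(\<Sum>i<n. c i^2 + d i^2) = (c n^2 + d n^2) - 1/2"
    using h1 h4 by (simp add: sum.distrib sum_subtractf)
  have s3: "(\<Sum>i<n. a i * c i - b i * d i) = a n * c n - b n * d n"
    using h3 by (simp add: sum_subtractf)
  show False
  proof (rule neg_lemma_c[of \<alpha> n \<gamma>])
    show "(\<Sum>i<n. \<alpha> i * cnj (\<alpha> i)) = \<alpha> n * cnj (\<alpha> n) - 1/2"
      using s1 by (simp add: complex_eq_iff Re_sum Im_sum \<alpha>_def power2_eq_square)
    show "(\<Sum>i<n. \<gamma> i * cnj (\<gamma> i)) = \<gamma> n * cnj (\<gamma> n) - 1/2"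
      using s2 by (simp add: complex_eq_iff Re_sum Im_sum \<gamma>_def power2_eq_square)
    show "(\<Sum>i<n. \<alpha> i * cnj (\<gamma> i)) = \<alpha> n * cnj (\<gamma> n)"
      using s3 h2 by (simp add: complex_eq_iff Re_sum Im_sum \<alpha>_def \<gamma>_def algebra_simps)
  qed
qed




definition Wq :: "(quat \<Rightarrow> real) \<Rightarrow> quat \<Rightarrow> real" where
  "Wq cp v = cp (v * Quat 0 1 0 0 * qcnj v)"

definition cf :: "nat \<Rightarrow> complex \<Rightarrow> complex \<Rightarrow> complex \<Rightarrow> nat \<Rightarrow> complex" where
  "cf m x y w j = (if j = 0 then x else if j = 1 then y else if j = m then w else 1)"

lemma sg_quat: "(sg n k :: quat) = Quat (sg n k) 0 0 0"
  by (simp add: sg_def one_quat_def uminus_quat_def)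

lemma qoc_eq: "quat_of_complex z = Quat (Re z) (Im z) 0 0" by (simp add: quat_of_complex_def)

lemma qI_sum: "qI (sum f A) = (\<Sum>x\<in>A. qI (f x))"
  by (induction A rule: infinite_finite_induct) (simp_all add: zero_quat_def plus_quat_def)
lemma qJ_sum: "qJ (sum f A) = (\<Sum>x\<in>A. qJ (f x))"
  by (induction A rule: infinite_finite_induct) (simp_all add: zero_quat_def plus_quat_def)
lemma qK_sum: "qK (sum f A) = (\<Sum>x\<in>A. qK (f x))"
  by (induction A rule: infinite_finite_induct) (simp_all add: zero_quat_def plus_quat_def)
lemma qRe_sum: "qRe (sum f A) = (\<Sum>x\<in>A. qRe (f x))"
  by (induction A rule: infinite_finite_induct) (simp_all add: zero_quat_def plus_quat_def)

lemma qI_term: "qI (v * Quat a b 0 0 * (Quat s 0 0 0 * qcnj v * Quat t 0 0 0)) = b * s * t * Wq qI v"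
  by (cases v) (simp add: Wq_def times_quat_def qcnj_def algebra_simps)
lemma qJ_term: "qJ (v * Quat a b 0 0 * (Quat s 0 0 0 * qcnj v * Quat t 0 0 0)) = b * s * t * Wq qJ v"
  by (cases v) (simp add: Wq_def times_quat_def qcnj_def algebra_simps)
lemma qK_term: "qK (v * Quat a b 0 0 * (Quat s 0 0 0 * qcnj v * Quat t 0 0 0)) = b * s * t * Wq qK v"
  by (cases v) (simp add: Wq_def times_quat_def qcnj_def algebra_simps)

lemma comp_trace:
  fixes cp :: "quat \<Rightarrow> real"
  assumes csum: "\<And>f (A::nat set). cp (sum f A) = (\<Sum>x\<in>A. cp (f x))"
    and cterm: "\<And>v a b s t. cp (v * Quat a b 0 0 * (Quat s 0 0 0 * qcnj v * Quat t 0 0 0)) = b * s * t * Wq cp v"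
    and g: "g \<in> Sp n" and g': "g' \<in> carrier_mat (n+1) (n+1)" and gg: "g * g' = 1\<^sub>m (n+1)"
    and mn: "2 \<le> m" "m \<le> n"
  shows "cp (qtrace (g * block_embed n m (dg (m+1) (cf m x y w)) * g')) =
     Im x * (\<Sum>i<n+1. sg n i * Wq cp (g $$ (i, n-m)))
   + Im y * (\<Sum>i<n+1. sg n i * Wq cp (g $$ (i, n-m+1)))
   - Im w * (\<Sum>i<n+1. sg n i * Wq cp (g $$ (i, n)))"
proof -
  have gc: "g \<in> carrier_mat (n+1) (n+1)" using g by (simp add: Sp_def)
  define z where "z k = (if k < n-m then 1 else cf m x y w (k-(n-m)))" for k
  define V where "V k = (\<Sum>i<n+1. sg n i * Wq cp (g $$ (i, k)))" for k
  have "block_embed n m (dg (m+1) (cf m x y w)) = dg (n+1) (\<lambda>k. quat_of_complex (z k))"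
    unfolding block_embed_dg[OF mn(2)] z_def by (rule dg_cong) (simp add: quat_of_complex_def one_quat_def)
  then have "qtrace (g * block_embed n m (dg (m+1) (cf m x y w)) * g') =
     (\<Sum>i<n+1. \<Sum>k<n+1. g $$ (i,k) * quat_of_complex (z k) * g' $$ (k,i))"
    using trace_conj_dg[OF gc g'] by simp
  also have "\<dots> = (\<Sum>i<n+1. \<Sum>k<n+1. g $$ (i,k) * Quat (Re (z k)) (Im (z k)) 0 0 *
        (Quat (sg n k) 0 0 0 * qcnj (g $$ (i,k)) * Quat (sg n i) 0 0 0))"
    by (intro sum.cong refl) (simp add: Sp_inv[OF g g' gg] sg_quat qoc_eq)
  finally have "cp (qtrace (g * block_embed n m (dg (m+1) (cf m x y w)) * g')) =
      (\<Sum>i<n+1. \<Sum>k<n+1. Im (z k) * sg n k * sg n i * Wq cp (g $$ (i,k)))"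
    by (simp only: csum cterm)
  also have "\<dots> = (\<Sum>k<n+1. \<Sum>i<n+1. Im (z k) * sg n k * sg n i * Wq cp (g $$ (i,k)))"
    by (rule sum.swap)
  also have "\<dots> = (\<Sum>k<n+1. Im (z k) * sg n k * V k)"
    unfolding V_def by (intro sum.cong refl) (simp add: sum_distrib_left mult.assoc del: sum.lessThan_Suc)
  also have "\<dots> = (\<Sum>k\<in>{n-m, n-m+1, n}. Im (z k) * sg n k * V k)"
    by (rule sum.mono_neutral_right) (use mn in \<open>auto simp: z_def cf_def\<close>)
  also have "\<dots> = Im x * V (n-m) + Im y * V (n-m+1) - Im w * V n"
  proof -
    have d: "n-m \<noteq> Suc (n-m)" "n-m \<noteq> n" "Suc (n-m) \<noteq> n" "\<not> n < n-m" "\<not> Suc (n-m) < n-m"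
        "n - m - (n-m) = 0" "Suc (n-m) - (n-m) = 1" "n - (n-m) = m" "m \<noteq> 0" "m \<noteq> 1"
      using mn by auto
    show ?thesis using d by (simp add: z_def cf_def sg_def)
  qed
  finally show ?thesis unfolding V_def .
qed




lemma Wq_I: "Wq qI v = qRe v^2 + qI v^2 - qJ v^2 - qK v^2"
  by (cases v) (simp add: Wq_def times_quat_def qcnj_def power2_eq_square)
lemma Wq_J: "Wq qJ v = 2*(qI v*qJ v + qRe v*qK v)"
  by (cases v) (simp add: Wq_def times_quat_def qcnj_def algebra_simps)
lemma Wq_K: "Wq qK v = 2*(qI v*qK v - qRe v*qJ v)"
  by (cases v) (simp add: Wq_def times_quat_def qcnj_def algebra_simps)
lemma norm_term: "qRe (qcnj v * (sg n i :: quat) * v) = sg n i * (qRe v^2 + qI v^2 + qJ v^2 + qK v^2)"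
  by (cases v) (simp add: sg_quat times_quat_def qcnj_def algebra_simps power2_eq_square)

lemma split_sg: "(\<Sum>i<n+1. sg n i * f i) = (\<Sum>i<n. f i) - (f n :: real)"
  by (simp add: sg_def)

lemma prod_cf:
  assumes "2 \<le> m" shows "(\<Prod>k<m+1. cf m x y w k) = x * y * w"
proof -
  have "(\<Prod>k<m+1. cf m x y w k) = (\<Prod>k\<in>{0,1,m}. cf m x y w k)"
    by (rule prod.mono_neutral_right) (use assms in \<open>auto simp: cf_def\<close>)
  also have "\<dots> = x * y * w" using assms by (simp add: cf_def)
  finally show ?thesis .
qed

lemma cf_SU:
  assumes "2 \<le> m" "x * y * w = 1" "cnj x * x = 1" "cnj y * y = 1" "cnj w * w = 1"
  shows "dg (m+1) (cf m x y w) \<in> SU m"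
proof (rule su_dg)
  show "(\<Prod>k<m+1. cf m x y w k) = 1" using prod_cf[OF assms(1)] assms(2) by simp
qed (use assms in \<open>auto simp: cf_def\<close>)

lemma Vn_zero:
  fixes cp :: "quat \<Rightarrow> real"
  assumes csum: "\<And>f (A::nat set). cp (sum f A) = (\<Sum>x\<in>A. cp (f x))"
    and cterm: "\<And>v a b s t. cp (v * Quat a b 0 0 * (Quat s 0 0 0 * qcnj v * Quat t 0 0 0)) = b * s * t * Wq cp v"
    and g: "g \<in> Sp n" and g': "g' \<in> carrier_mat (n+1) (n+1)" and gg: "g * g' = 1\<^sub>m (n+1)"
    and mn: "2 \<le> m" "m \<le> n"
    and real: "\<And>x y w. x * y * w = 1 \<Longrightarrow> cnj x * x = 1 \<Longrightarrow> cnj y * y = 1 \<Longrightarrow> cnj w * w = 1 \<Longrightarrow>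
       cp (qtrace (g * block_embed n m (dg (m+1) (cf m x y w)) * g')) = 0"
  shows "(\<Sum>i<n+1. sg n i * Wq cp (g $$ (i, n))) = 0"
proof -
  note ct = comp_trace[of cp, OF csum cterm g g' gg mn]
  define p where "p = (\<Sum>i<n+1. sg n i * Wq cp (g $$ (i, n-m)))"
  define q where "q = (\<Sum>i<n+1. sg n i * Wq cp (g $$ (i, n-m+1)))"
  define r where "r = (\<Sum>i<n+1. sg n i * Wq cp (g $$ (i, n)))"
  have "p + q = 0" using real[of \<i> \<i> "-1"] ct[of \<i> \<i> "-1"] unfolding p_def q_def r_def by simp
  moreover have "p - r = 0" using real[of \<i> "-1" \<i>] ct[of \<i> "-1" \<i>] unfolding p_def q_def r_def by simp
  moreover have "q - r = 0" using real[of "-1" \<i> \<i>] ct[of "-1" \<i> \<i>] unfolding p_def q_def r_def by simp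
  ultimately show ?thesis unfolding r_def[symmetric] by linarith
qed




theorem corollary4p13:
  fixes m n :: nat and H :: "quat mat set"
  assumes "2 \<le> m" and "m \<le> n"
    and "\<exists>g \<in> Sp n. \<exists>g' \<in> carrier_mat (n + 1) (n + 1).
           g * g' = 1\<^sub>m (n + 1) \<and> g' * g = 1\<^sub>m (n + 1) \<and>
           H = (\<lambda>X. g * X * g') ` ISU n m"
  shows "\<not> (qtrace ` H \<subseteq> qreal)"
proof
  assume R: "qtrace ` H \<subseteq> qreal"
  obtain g g' where g: "g \<in> Sp n" and g': "g' \<in> carrier_mat (n+1) (n+1)"
    and gg: "g * g' = 1\<^sub>m (n+1)" and H: "H = (\<lambda>X. g * X * g') ` ISU n m"
    using assms(3) by blast
  have mn: "2 \<le> m" "m \<le> n" using assms(1,2) .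
  have inH: "g * block_embed n m (dg (m+1) (cf m x y w)) * g' \<in> H"
    if "x * y * w = 1" "cnj x * x = 1" "cnj y * y = 1" "cnj w * w = 1" for x y w
    unfolding H ISU_def using cf_SU[OF mn(1) that] by blast
  have re: "qtrace (g * block_embed n m (dg (m+1) (cf m x y w)) * g') \<in> qreal"
    if "x * y * w = 1" "cnj x * x = 1" "cnj y * y = 1" "cnj w * w = 1" for x y w
    using R inH[OF that] by blast
  have VI: "(\<Sum>i<n+1. sg n i * Wq qI (g $$ (i, n))) = 0"
    by (rule Vn_zero[OF qI_sum qI_term g g' gg mn]) (use re in \<open>auto simp: qreal_def\<close>)
  have VJ: "(\<Sum>i<n+1. sg n i * Wq qJ (g $$ (i, n))) = 0"
    by (rule Vn_zero[OF qJ_sum qJ_term g g' gg mn]) (use re in \<open>auto simp: qreal_def\<close>)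
  have VK: "(\<Sum>i<n+1. sg n i * Wq qK (g $$ (i, n))) = 0"
    by (rule Vn_zero[OF qK_sum qK_term g g' gg mn]) (use re in \<open>auto simp: qreal_def\<close>)
  have col: "(\<Sum>i<n+1. qcnj (g $$ (i,n)) * sg n i * g $$ (i,n)) = sg n n"
    by (rule Sp_col[OF g]) simp
  have VR: "(\<Sum>i<n+1. sg n i * (qRe (g $$ (i,n))^2 + qI (g $$ (i,n))^2 + qJ (g $$ (i,n))^2 + qK (g $$ (i,n))^2)) = -1"
  proof -
    have "qRe (\<Sum>i<n+1. qcnj (g $$ (i,n)) * sg n i * g $$ (i,n)) = -1"
      unfolding col by (simp add: sg_def uminus_quat_def one_quat_def)
    then show ?thesis by (simp only: qRe_sum norm_term)
  qed
  define a where "a i = qRe (g $$ (i,n))" for i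
  define b where "b i = qI (g $$ (i,n))" for i
  define c where "c i = qJ (g $$ (i,n))" for i
  define d where "d i = qK (g $$ (i,n))" for i
  show False
  proof (rule neg_lemma_r[of a b c d n])
    show "(\<Sum>i<n. a i^2 + b i^2 - c i^2 - d i^2) - (a n^2 + b n^2 - c n^2 - d n^2) = 0"
      using VI unfolding Wq_I split_sg a_def b_def c_def d_def .
    show "(\<Sum>i<n. b i * c i + a i * d i) - (b n * c n + a n * d n) = 0"
    proof -
      have "2 * ((\<Sum>i<n. b i * c i + a i * d i) - (b n * c n + a n * d n)) = 0"
        using VJ unfolding Wq_J split_sg a_def b_def c_def d_def
        by (simp only: sum_distrib_left right_diff_distrib)
      then show ?thesis by simp
    qed
    show "(\<Sum>i<n. b i * d i - a i * c i) - (b n * d n - a n * c n) = 0"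
    proof -
      have "2 * ((\<Sum>i<n. b i * d i - a i * c i) - (b n * d n - a n * c n)) = 0"
        using VK unfolding Wq_K split_sg a_def b_def c_def d_def
        by (simp only: sum_distrib_left right_diff_distrib)
      then show ?thesis by simp
    qed
    show "(\<Sum>i<n. a i^2 + b i^2 + c i^2 + d i^2) - (a n^2 + b n^2 + c n^2 + d n^2) = -1"
      using VR unfolding split_sg a_def b_def c_def d_def .
  qed
qed


end
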